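(* Consider the APT–DIFT game described in the context and the value-iteration sequence $V^{(0)},V^{(1)},V^{(2)},\dots$ of functions $\mathbf S\to\mathbb R$ defined there. Then for every $k\ge0$ and every $s\in\mathbf S$, $V^{(k+1)}(s)\ge V^{(k)}(s)$.
   Context: Let $\mathcal G=(V_{\mathcal G},E_{\mathcal G})$ be a finite directed graph with $V_{\mathcal G}=\{v_1,\dots,v_N\}$, let $\lambda\subset V_{\mathcal G}$ be a set of entry points and $\mathcal D=\{v_1,\dots,v_q\}\subset V_{\mathcal G}$ a destination set. Let $FN,FP:V_{\mathcal G}\to(0,1)$ and $\beta>0$. The APT–DIFT game has state space $\mathbf S=\{v_0,v_1,\dots,v_N,\phi,\tau_A,\tau_B\}$; the states in $\{\phi,\tau_A,\tau_B\}\cup\mathcal D$ are absorbing with empty action sets. At $v_0$: $\mathcal A_A(v_0)=\lambda$, $\mathcal A_D(v_0)=\{0\}$. At a non-absorbing $s=v_i\in V_{\mathcal G}$: $\mathcal A_A(s)=\{\phi\}\cup\{v_j:(v_i,v_j)\in E_{\mathcal G}\}$, $\mathcal A_D(s)=\{0\}\cup\{v_j:(v_i,v_j)\in E_{\mathcal G}\}$. Transition probabilities $P(s,a,d,s')$ for $a\in\mathcal A_A(s)$, $d\in\mathcal A_D(s)$: if $d=0$, $s'=a$ with probability $1$; if $d=a$, $s'=a$ with probability $FN(d)$ and $s'=\tau_A$ with probability $1-FN(d)$; if $d\ne0$ and $d\neq a$, $s'=\tau_B$ with probability $FP(d)$ and $s'=a$ with probability $1-FP(d)$. Value iteration (Algorithm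 1): $V^{(0)}(s)=0$ for all $s\in\mathbf S$; $V^{(1)}(s)=\beta$ for $s\in\{\tau_A,\phi\}$ and $V^{(1)}(s)=0$ for all other $s$; and for $k\ge1$, $V^{(k+1)}(s)=\beta$ if $s\in\{\phi,\tau_A\}$, $V^{(k+1)}(s)=0$ if $s\in\{\tau_B\}\cup\mathcal D$, and otherwise $$V^{(k+1)}(s)=\max_{p\in\Delta(\mathcal A_D(s))}\ \min_{a\in\mathcal A_A(s)}\ \sum_{s'\in\mathbf S}\sum_{d\in\mathcal A_D(s)}p(d)\,P(s,a,d,s')\,V^{(k)}(s'),$$ where $\Delta(\mathcal A_D(s))$ is the set of probability distributions on $\mathcal A_D(s)$. *)

theory Defs
  imports "HOL-Probability.Probability_Mass_Function"
begin

text \<open>States of the APT-DIFT game: the initial state v0, a graph vertex,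
  and the absorbing states phi, tau_A, tau_B.\<close>
datatype 'v st = V0 | Vtx 'v | Phi | TauA | TauB

definition states :: "'v set \<Rightarrow> 'v st set" where
  "states V = {V0, Phi, TauA, TauB} \<union> Vtx ` V"

fun actA :: "('v \<times> 'v) set \<Rightarrow> 'v set \<Rightarrow> 'v set \<Rightarrow> 'v st \<Rightarrow> 'v st set" where
  "actA E lam D V0 = Vtx ` lam"
| "actA E lam D (Vtx v) = (if v \<in> D then {} else insert Phi (Vtx ` {w. (v, w) \<in> E}))"
| "actA E lam D _ = {}"

text \<open>Defender action sets A_D(s); the defender action 0 is None, a vertex v_j is Some v_j.\<close>
fun actD :: "('v \<times> 'v) set \<Rightarrow> 'v set \<Rightarrow> 'v st \<Rightarrow> 'v option set" where
  "actD E D V0 = {None}"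
| "actD E D (Vtx v) = (if v \<in> D then {} else insert None (Some ` {w. (v, w) \<in> E}))"
| "actD E D _ = {}"

text \<open>Transition probability P(s,a,d,s') (independent of s).\<close>
definition trans :: "('v \<Rightarrow> real) \<Rightarrow> ('v \<Rightarrow> real) \<Rightarrow> 'v st \<Rightarrow> 'v option \<Rightarrow> 'v st \<Rightarrow> real" where
  "trans FN FP a d s' =
     (case d of
        None \<Rightarrow> (if s' = a then 1 else 0)
      | Some w \<Rightarrow>
          (if a = Vtx w
           then (if s' = a then FN w else 0) + (if s' = TauA then 1 - FN w else 0)
           else (if s' = TauB then FP w else 0) + (if s' = a then 1 - FP w else 0)))"

definition bellman ::
  "'v set \<Rightarrow> ('v \<times> 'v) set \<Rightarrow> 'v set \<Rightarrow> 'v set \<Rightarrow> ('v \<Rightarrow> real) \<Rightarrow> ('v \<Rightarrow> real)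
   \<Rightarrow> ('v st \<Rightarrow> real) \<Rightarrow> 'v st \<Rightarrow> real" where
  "bellman V E lam D FN FP W s =
     Sup ((\<lambda>p. Min ((\<lambda>a. \<Sum>s'\<in>states V. \<Sum>d\<in>actD E D s.
                          pmf p d * trans FN FP a d s' * W s') ` actA E lam D s))
          ` {p. set_pmf p \<subseteq> actD E D s})"

fun vi ::
  "'v set \<Rightarrow> ('v \<times> 'v) set \<Rightarrow> 'v set \<Rightarrow> 'v set \<Rightarrow> ('v \<Rightarrow> real) \<Rightarrow> ('v \<Rightarrow> real)
   \<Rightarrow> real \<Rightarrow> nat \<Rightarrow> 'v st \<Rightarrow> real" where
  "vi V E lam D FN FP \<beta> 0 s = 0"
| "vi V E lam D FN FP \<beta> (Suc 0) s = (if s \<in> {TauA, Phi} then \<beta> else 0)"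
| "vi V E lam D FN FP \<beta> (Suc (Suc k)) s =
     (if s \<in> {Phi, TauA} then \<beta>
      else if s \<in> insert TauB (Vtx ` D) then 0
      else bellman V E lam D FN FP (vi V E lam D FN FP \<beta> (Suc k)) s)"

end

theory Submission
  imports Defs
begin

lemma trans_bounds:
  assumes "0 \<le> FN w" "FN w \<le> 1" "0 \<le> FP w" "FP w \<le> 1" "d = Some w \<or> d = None"
  shows "0 \<le> trans FN FP a d s' \<and> trans FN FP a d s' \<le> 2"
  using assms unfolding trans_def by (auto split: option.splits)

lemma aux_le: "0 \<le> (x::real) \<Longrightarrow> x \<le> 2 \<Longrightarrow> x * w \<le> 2 * \<bar>w\<bar>"
proof -
  assume a: "0 \<le> x" "x \<le> 2"
  have "x * w \<le> x * \<bar>w\<bar>" using a by (intro mult_left_mono) auto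
  also have "\<dots> \<le> 2 * \<bar>w\<bar>" using a by (intro mult_right_mono) auto
  finally show ?thesis .
qed

lemma bellman_mono:
  assumes fin: "finite V" and EV: "E \<subseteq> V \<times> V" and lam: "lam \<subseteq> V" "lam \<noteq> {}"
    and FN: "\<forall>v\<in>V. 0 < FN v \<and> FN v < 1"
    and FP: "\<forall>v\<in>V. 0 < FP v \<and> FP v < 1"
    and s: "s = V0 \<or> (\<exists>v\<in>V. v \<notin> D \<and> s = Vtx v)"
    and W: "\<forall>x\<in>states V. W1 x \<le> W2 x"
  shows "bellman V E lam D FN FP W1 s \<le> bellman V E lam D FN FP W2 s"
proof -
  have finA: "finite (actA E lam D s)" and neA: "actA E lam D s \<noteq> {}"
  proof -
    have "finite {w. (v, w) \<in> E}" if "v \<in> V" for v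
      by (rule finite_subset[of _ V]) (use EV fin in auto)
    moreover have "finite lam" using lam fin finite_subset by blast
    ultimately show "finite (actA E lam D s)" "actA E lam D s \<noteq> {}"
      using s lam by auto
  qed
  have finD: "finite (actD E D s)"
  proof -
    have "finite {w. (v, w) \<in> E}" if "v \<in> V" for v
      by (rule finite_subset[of _ V]) (use EV fin in auto)
    then show ?thesis using s by auto
  qed
  have NoneD: "None \<in> actD E D s" using s by auto
  have tb: "0 \<le> trans FN FP a d s' \<and> trans FN FP a d s' \<le> 2" if "d \<in> actD E D s" for a d s'
  proof (cases d)
    case None then show ?thesis by (simp add: trans_def)
  next
    case (Some w)
    with that s EV have "w \<in> V" by auto
    then show ?thesis using FN FP Some by (intro trans_bounds[of FN w FP]) auto
  qed
  define f where "f = (\<lambda>W p. Min ((\<lambda>a. \<Sum>s'\<in>states V. \<Sum>d\<in>actD E D s.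
                          pmf p d * trans FN FP a d s' * W s') ` actA E lam D s))"
  obtain a0 where a0: "a0 \<in> actA E lam D s" using neA by auto
  have "Sup (f W1 ` {p. set_pmf p \<subseteq> actD E D s}) \<le> Sup (f W2 ` {p. set_pmf p \<subseteq> actD E D s})"
  proof (rule cSUP_mono)
    show "{p. set_pmf p \<subseteq> actD E D s} \<noteq> {}"
      using NoneD by (auto intro!: exI[of _ "return_pmf None"])
    show "bdd_above (f W2 ` {p. set_pmf p \<subseteq> actD E D s})"
    proof (rule bdd_aboveI2)
      fix p
      have "f W2 p \<le> (\<Sum>s'\<in>states V. \<Sum>d\<in>actD E D s. pmf p d * trans FN FP a0 d s' * W2 s')"
        unfolding f_def using finA a0 by (intro Min_le) auto
      also have "\<dots> \<le> (\<Sum>s'\<in>states V. \<Sum>d\<in>actD E D s. 2 * \<bar>W2 s'\<bar>)"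
      proof (intro sum_mono)
        fix s' d assume d: "d \<in> actD E D s"
        have "0 \<le> pmf p d * trans FN FP a0 d s'" using tb[OF d] by simp
        moreover have "pmf p d * trans FN FP a0 d s' \<le> 1 * 2"
          using tb[OF d] by (intro mult_mono) (auto simp: pmf_le_1)
        ultimately show "pmf p d * trans FN FP a0 d s' * W2 s' \<le> 2 * \<bar>W2 s'\<bar>"
          using aux_le by simp
      qed
      finally show "f W2 p \<le> (\<Sum>s'\<in>states V. \<Sum>d\<in>actD E D s. 2 * \<bar>W2 s'\<bar>)" .
    qed
    fix p assume p: "p \<in> {p. set_pmf p \<subseteq> actD E D s}"
    have "f W1 p \<le> f W2 p"
      unfolding f_def
    proof (rule Min.boundedI)
      show "finite ((\<lambda>a. \<Sum>s'\<in>states V. \<Sum>d\<in>actD E D s.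
                          pmf p d * trans FN FP a d s' * W2 s') ` actA E lam D s)" using finA by simp
      show "(\<lambda>a. \<Sum>s'\<in>states V. \<Sum>d\<in>actD E D s.
                          pmf p d * trans FN FP a d s' * W2 s') ` actA E lam D s \<noteq> {}" using neA by simp
      fix y assume "y \<in> (\<lambda>a. \<Sum>s'\<in>states V. \<Sum>d\<in>actD E D s.
                          pmf p d * trans FN FP a d s' * W2 s') ` actA E lam D s"
      then obtain a where a: "a \<in> actA E lam D s" and y: "y = (\<Sum>s'\<in>states V. \<Sum>d\<in>actD E D s.
                          pmf p d * trans FN FP a d s' * W2 s')" by auto
      have "Min ((\<lambda>a. \<Sum>s'\<in>states V. \<Sum>d\<in>actD E D s.
                          pmf p d * trans FN FP a d s' * W1 s') ` actA E lam D s)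
            \<le> (\<Sum>s'\<in>states V. \<Sum>d\<in>actD E D s. pmf p d * trans FN FP a d s' * W1 s')"
        using finA a by (intro Min_le) auto
      also have "\<dots> \<le> y" unfolding y
      proof (intro sum_mono)
        fix s' d assume s': "s' \<in> states V" and d: "d \<in> actD E D s"
        have "0 \<le> pmf p d * trans FN FP a d s'" using tb[OF d] by simp
        then show "pmf p d * trans FN FP a d s' * W1 s' \<le> pmf p d * trans FN FP a d s' * W2 s'"
          using W s' by (intro mult_left_mono) auto
      qed
      finally show "Min ((\<lambda>a. \<Sum>s'\<in>states V. \<Sum>d\<in>actD E D s.
                          pmf p d * trans FN FP a d s' * W1 s') ` actA E lam D s) \<le> y" .
    qed
    then show "\<exists>m\<in>{p. set_pmf p \<subseteq> actD E D s}. f W1 p \<le> f W2 m" using p by blast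
  qed
  then show ?thesis unfolding bellman_def f_def .
qed

lemma bellman_zero:
  assumes fin: "finite V" and EV: "E \<subseteq> V \<times> V" and lam: "lam \<subseteq> V" "lam \<noteq> {}"
    and s: "s = V0 \<or> (\<exists>v\<in>V. v \<notin> D \<and> s = Vtx v)"
  shows "bellman V E lam D FN FP (\<lambda>_. 0) s = 0"
proof -
  have neA: "actA E lam D s \<noteq> {}" using s lam by auto
  have NoneD: "None \<in> actD E D s" using s by auto
  have ne: "{p. set_pmf p \<subseteq> actD E D s} \<noteq> {}"
    using NoneD by (auto intro!: exI[of _ "return_pmf None"])
  have "(\<lambda>a. \<Sum>s'\<in>states V. \<Sum>d\<in>actD E D s. pmf p d * trans FN FP a d s' * (0::real)) ` actA E lam D s = {0}" for p
    using neA by auto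
  then show ?thesis unfolding bellman_def using ne by simp
qed

theorem lemma1:
  fixes V :: "'v set" and E :: "('v \<times> 'v) set" and lam D :: "'v set"
    and FN FP :: "'v \<Rightarrow> real" and \<beta> :: real
  assumes "finite V"
    and "E \<subseteq> V \<times> V"
    and "lam \<subseteq> V" and "lam \<noteq> {}"
    and "D \<subseteq> V"
    and "\<forall>v\<in>V. 0 < FN v \<and> FN v < 1"
    and "\<forall>v\<in>V. 0 < FP v \<and> FP v < 1"
    and "\<beta> > 0"
  shows "\<forall>k. \<forall>s\<in>states V. vi V E lam D FN FP \<beta> (Suc k) s \<ge> vi V E lam D FN FP \<beta> k s"
proof
  fix k show "\<forall>s\<in>states V. vi V E lam D FN FP \<beta> (Suc k) s \<ge> vi V E lam D FN FP \<beta> k s"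
  proof (induction k)
    case 0
    then show ?case using assms by auto
  next
    case (Suc k)
    show ?case
    proof
      fix s assume s: "s \<in> states V"
      show "vi V E lam D FN FP \<beta> (Suc (Suc k)) s \<ge> vi V E lam D FN FP \<beta> (Suc k) s"
      proof (cases "s \<in> {Phi, TauA} \<or> s \<in> insert TauB (Vtx ` D)")
        case True
        then show ?thesis by (cases k) auto
      next
        case False
        then have s': "s = V0 \<or> (\<exists>v\<in>V. v \<notin> D \<and> s = Vtx v)" using s by (auto simp: states_def)
        show ?thesis
        proof (cases k)
          case 0
          have "0 = bellman V E lam D FN FP (\<lambda>_. 0) s"
            using bellman_zero assms s' by metis
          also have "\<dots> \<le> bellman V E lam D FN FP (vi V E lam D FN FP \<beta> (Suc 0)) s"
            using Suc.IH assms s' unfolding 0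
            by (intro bellman_mono) auto
          finally show ?thesis using False 0 by auto
        next
          case (Suc j)
          have "bellman V E lam D FN FP (vi V E lam D FN FP \<beta> (Suc j)) s
                \<le> bellman V E lam D FN FP (vi V E lam D FN FP \<beta> (Suc (Suc j))) s"
            using Suc.IH assms s' unfolding Suc
            by (intro bellman_mono) auto
          then show ?thesis using False Suc by auto
        qed
      qed
    qed
  qed
qed

end
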